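(* Let $(A,\cdot,\alpha)$ be a Hom-Malcev algebra over a field $\mathbb{K}$ of characteristic $0$. Then the identity $$J_{\alpha}(w\cdot x,\alpha(y),\alpha(z)) = J_{\alpha}(w,y,z)\cdot\alpha^{2}(x) + \alpha^{2}(w)\cdot J_{\alpha}(x,y,z) - 2J_{\alpha}(y\cdot z,\alpha(w),\alpha(x)) \qquad (\ast)$$ holds for all $w,x,y,z\in A$. Moreover, in any anticommutative multiplicative Hom-algebra $(A,\cdot,\alpha)$ over $\mathbb{K}$, the identity $(\ast)$ (for all $w,x,y,z\in A$) is equivalent to the Hom-Malcev identity $$J_{\alpha}(\alpha(x),\alpha(y),x\cdot z) = J_{\alpha}(x,y,z)\cdot\alpha^{2}(x)$$ for all $x,y,z\in A$.
   Context: A (multiplicative) Hom-algebra is a triple $(A,\cdot,\alpha)$ where $A$ is a vector space over a field $\mathbb{K}$ of characteristic $0$, $\cdot:A\times A\to A$ is bilinear (written $xy$ or $x\cdot y$), and $\alpha:A\to A$ is linear with $\alpha(x\cdot y)=\alpha(x)\cdot\alpha(y)$ for all $x,y$. It is anticommutative if $x\cdot y=-y\cdot x$ for all $x,y$. The Hom-Jacobian is $J_{\alpha}(x,y,z)=xy\cdot\alpha(z)+yz\cdot\alpha(x)+zx\cdot\alpha(y)$, where $xy\cdot\alpha(z)$ means $(x\cdot y)\cdot\alpha(z)$. A Hom-Malcev algebra is an anticommutative multiplicative Hom-algebra satisfying $J_{\alpha}(\alpha(x),\alpha(y),x\cdot z)=J_{\alpha}(x,y,z)\cdot\alpha^{2}(x)$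 for all $x,y,z\in A$. *)

theory Defs
  imports Main "HOL.Vector_Spaces"
begin

definition hom_algebra ::
  "('k::field \<Rightarrow> 'a::ab_group_add \<Rightarrow> 'a) \<Rightarrow> ('a \<Rightarrow> 'a \<Rightarrow> 'a) \<Rightarrow> ('a \<Rightarrow> 'a) \<Rightarrow> bool" where
  "hom_algebra scale mult alpha \<longleftrightarrow>
     vector_space scale \<and>
     (\<forall>x. Vector_Spaces.linear scale scale (mult x)) \<and>
     (\<forall>y. Vector_Spaces.linear scale scale (\<lambda>x. mult x y)) \<and>
     Vector_Spaces.linear scale scale alpha \<and>
     (\<forall>x y. alpha (mult x y) = mult (alpha x) (alpha y))"

definition anticommutative :: "('a::ab_group_add \<Rightarrow> 'a \<Rightarrow> 'a) \<Rightarrow> bool" where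
  "anticommutative mult \<longleftrightarrow> (\<forall>x y. mult x y = - mult y x)"

definition hom_jacobian :: "('a \<Rightarrow> 'a \<Rightarrow> 'a::ab_group_add) \<Rightarrow> ('a \<Rightarrow> 'a) \<Rightarrow> 'a \<Rightarrow> 'a \<Rightarrow> 'a \<Rightarrow> 'a" where
  "hom_jacobian mult alpha x y z =
     mult (mult x y) (alpha z) + mult (mult y z) (alpha x) + mult (mult z x) (alpha y)"

definition hom_malcev_identity :: "('a \<Rightarrow> 'a \<Rightarrow> 'a::ab_group_add) \<Rightarrow> ('a \<Rightarrow> 'a) \<Rightarrow> bool" where
  "hom_malcev_identity mult alpha \<longleftrightarrow>
     (\<forall>x y z. hom_jacobian mult alpha (alpha x) (alpha y) (mult x z)
              = mult (hom_jacobian mult alpha x y z) (alpha (alpha x)))"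

definition hom_malcev :: "('k::field \<Rightarrow> 'a::ab_group_add \<Rightarrow> 'a) \<Rightarrow> ('a \<Rightarrow> 'a \<Rightarrow> 'a) \<Rightarrow> ('a \<Rightarrow> 'a) \<Rightarrow> bool" where
  "hom_malcev scale mult alpha \<longleftrightarrow>
     hom_algebra scale mult alpha \<and> anticommutative mult \<and> hom_malcev_identity mult alpha"

definition star_identity :: "('a \<Rightarrow> 'a \<Rightarrow> 'a::ab_group_add) \<Rightarrow> ('a \<Rightarrow> 'a) \<Rightarrow> bool" where
  "star_identity mult alpha \<longleftrightarrow>
     (\<forall>w x y z. hom_jacobian mult alpha (mult w x) (alpha y) (alpha z)
        = mult (hom_jacobian mult alpha w y z) (alpha (alpha x))
          + mult (alpha (alpha w)) (hom_jacobian mult alpha x y z)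
          - (hom_jacobian mult alpha (mult y z) (alpha w) (alpha x)
             + hom_jacobian mult alpha (mult y z) (alpha w) (alpha x)))"

end

theory Submission
  imports Defs
begin


lemma halve:
  fixes scale :: "'k::field_char_0 \<Rightarrow> 'a::ab_group_add \<Rightarrow> 'a"
  assumes vs: "vector_space scale" and h: "a + a = (0::'a)"
  shows "a = 0"
proof -
  interpret vector_space scale by (rule vs)
  have "scale (1/2) (a + a) = 0" using h by simp
  moreover have "scale (1/2) (a + a) = scale (1/2 + 1/2) a"
    by (simp only: scale_right_distrib scale_left_distrib)
  moreover have "(1/2 + 1/2 :: 'k) = 1" by simp
  ultimately show ?thesis by simp
qed

lemma third:
  fixes scale :: "'k::field_char_0 \<Rightarrow> 'a::ab_group_add \<Rightarrow> 'a"
  assumes vs: "vector_space scale" and h: "a + a + a = (0::'a)"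
  shows "a = 0"
proof -
  interpret vector_space scale by (rule vs)
  have "scale (1/3) (a + a + a) = 0" using h by simp
  moreover have "scale (1/3) (a + a + a) = scale (1/3 + 1/3 + 1/3) a"
    by (simp only: scale_right_distrib scale_left_distrib)
  moreover have "(1/3 + 1/3 + 1/3 :: 'k) = 1" by simp
  ultimately show ?thesis by simp
qed

lemma lin_add:
  assumes "Vector_Spaces.linear s1 s2 f" shows "f (a + b) = f a + f b"
  using assms unfolding module_hom_iff_linear[symmetric] module_hom_iff by blast

lemma add_neg: fixes f :: "'a::ab_group_add \<Rightarrow> 'b::ab_group_add"
  assumes "\<And>a b. f (a + b) = f a + f b" shows "f (- a) = - f a"
proof -
  have "f 0 = 0" using assms[of 0 0] by simp
  then have "f (-a) + f a = 0" using assms[of "-a" a] by simp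
  then show ?thesis by (simp add: eq_neg_iff_add_eq_0)
qed

lemma comb3: fixes gl :: "'a::ab_group_add"
  shows "gl - gr = (P - Q) - (p2-q2) - (p3-q3) \<Longrightarrow> P = Q \<Longrightarrow> p2 = q2 \<Longrightarrow> p3 = q3 \<Longrightarrow> gl = gr"
  by simp
lemma MtoL:
 fixes mult :: "'a::ab_group_add \<Rightarrow> 'a \<Rightarrow> 'a"
 assumes addl: "\<And>a b c. mult (a+b) c = mult a c + mult b c"
 and addr: "\<And>a b c. mult a (b+c) = mult a b + mult a c"
 and aadd: "\<And>a b. alpha (a+b) = alpha a + alpha b"
 and M: "\<And>x y z. hom_jacobian mult alpha (alpha x) (alpha y) (mult x z) = mult (hom_jacobian mult alpha x y z) (alpha (alpha x))"
 shows "hom_jacobian mult alpha (alpha x) (alpha y) (mult w z) + hom_jacobian mult alpha (alpha w) (alpha y) (mult x z)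
   = mult (hom_jacobian mult alpha x y z) (alpha (alpha w)) + mult (hom_jacobian mult alpha w y z) (alpha (alpha x))"
proof -
  have E1: "hom_jacobian mult alpha (alpha (x+w)) (alpha y) (mult (x+w) z) = mult (hom_jacobian mult alpha (x+w) y z) (alpha (alpha (x+w)))" by (rule M)
  have E2: "hom_jacobian mult alpha (alpha x) (alpha y) (mult x z) = mult (hom_jacobian mult alpha x y z) (alpha (alpha x))" by (rule M)
  have E3: "hom_jacobian mult alpha (alpha w) (alpha y) (mult w z) = mult (hom_jacobian mult alpha w y z) (alpha (alpha w))" by (rule M)
  show ?thesis
    apply (rule comb3[OF _ E1 E2 E3])
    unfolding hom_jacobian_def
    by (simp add: addl addr aadd algebra_simps)
qed

lemma comb_LS: fixes g :: "'a::ab_group_add"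
  shows "(g - h) + (g - h) = (P1-Q1) + ((P2-Q2)+(P2-Q2)) + (P3-Q3) - (P4-Q4) \<Longrightarrow> P1=Q1 \<Longrightarrow> P2=Q2 \<Longrightarrow> P3=Q3 \<Longrightarrow> P4=Q4 \<Longrightarrow> (g-h)+(g-h) = 0"
  by simp
lemma LtoS:
 fixes mult :: "'a::ab_group_add \<Rightarrow> 'a \<Rightarrow> 'a" and scale :: "'k::field_char_0 \<Rightarrow> 'a \<Rightarrow> 'a"
 assumes vs: "vector_space scale"
 and addl: "\<And>a b c. mult (a+b) c = mult a c + mult b c"
 and addr: "\<And>a b c. mult a (b+c) = mult a b + mult a c"
 and negl: "\<And>a b. mult (-a) b = - mult a b"
 and negr: "\<And>a b. mult a (-b) = - mult a b"
 and aneg: "\<And>a. alpha (-a) = - alpha a"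
 and amul: "\<And>a b. alpha (mult a b) = mult (alpha a) (alpha b)"
 and anti: "\<And>a b. mult a b = - mult b a"
 and H: "\<And>x w y z. hom_jacobian mult alpha (alpha x) (alpha y) (mult w z) + hom_jacobian mult alpha (alpha w) (alpha y) (mult x z) = mult (hom_jacobian mult alpha (x) (y) (z)) (alpha (alpha w)) + mult (hom_jacobian mult alpha (w) (y) (z)) (alpha (alpha x))"
 shows "hom_jacobian mult alpha (mult w x) (alpha y) (alpha z) = mult (hom_jacobian mult alpha (w) (y) (z)) (alpha (alpha x)) + mult (alpha (alpha w)) (hom_jacobian mult alpha (x) (y) (z)) - (hom_jacobian mult alpha (mult y z) (alpha w) (alpha x) + hom_jacobian mult alpha (mult y z) (alpha w) (alpha x))"
proof -
  have E1: "hom_jacobian mult alpha (alpha w) (alpha y) (mult x z) + hom_jacobian mult alpha (alpha x) (alpha y) (mult w z) = mult (hom_jacobian mult alpha (w) (y) (z)) (alpha (alpha x)) + mult (hom_jacobian mult alpha (x) (y) (z)) (alpha (alpha w))" by (rule H)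
  have E2: "hom_jacobian mult alpha (alpha w) (alpha x) (mult y z) + hom_jacobian mult alpha (alpha y) (alpha x) (mult w z) = mult (hom_jacobian mult alpha (w) (x) (z)) (alpha (alpha y)) + mult (hom_jacobian mult alpha (y) (x) (z)) (alpha (alpha w))" by (rule H)
  have E3: "hom_jacobian mult alpha (alpha w) (alpha z) (mult y x) + hom_jacobian mult alpha (alpha y) (alpha z) (mult w x) = mult (hom_jacobian mult alpha (w) (z) (x)) (alpha (alpha y)) + mult (hom_jacobian mult alpha (y) (z) (x)) (alpha (alpha w))" by (rule H)
  have E4: "hom_jacobian mult alpha (alpha w) (alpha x) (mult z y) + hom_jacobian mult alpha (alpha z) (alpha x) (mult w y) = mult (hom_jacobian mult alpha (w) (x) (y)) (alpha (alpha z)) + mult (hom_jacobian mult alpha (z) (x) (y)) (alpha (alpha w))" by (rule H)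
  have sw1: "mult (x) (w) = - mult (w) (x)" by (rule anti)
  have sw2: "mult (y) (w) = - mult (w) (y)" by (rule anti)
  have sw3: "mult (alpha y) (alpha x) = - mult (alpha x) (alpha y)" by (rule anti)
  have sw4: "mult (y) (x) = - mult (x) (y)" by (rule anti)
  have sw5: "mult (z) (w) = - mult (w) (z)" by (rule anti)
  have sw6: "mult (alpha z) (alpha x) = - mult (alpha x) (alpha z)" by (rule anti)
  have sw7: "mult (z) (x) = - mult (x) (z)" by (rule anti)
  have sw8: "mult (alpha z) (alpha y) = - mult (alpha y) (alpha z)" by (rule anti)
  have sw9: "mult (z) (y) = - mult (y) (z)" by (rule anti)
  have sw10: "mult (mult (w) (x)) (alpha y) = - mult (alpha y) (mult (w) (x))" by (rule anti)
  have sw11: "mult (mult (w) (x)) (alpha z) = - mult (alpha z) (mult (w) (x))" by (rule anti)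
  have sw12: "mult (mult (w) (y)) (alpha x) = - mult (alpha x) (mult (w) (y))" by (rule anti)
  have sw13: "mult (mult (w) (y)) (alpha z) = - mult (alpha z) (mult (w) (y))" by (rule anti)
  have sw14: "mult (mult (w) (z)) (alpha x) = - mult (alpha x) (mult (w) (z))" by (rule anti)
  have sw15: "mult (mult (w) (z)) (alpha y) = - mult (alpha y) (mult (w) (z))" by (rule anti)
  have sw16: "mult (mult (alpha w) (mult (x) (y))) (alpha (alpha z)) = - mult (alpha (alpha z)) (mult (alpha w) (mult (x) (y)))" by (rule anti)
  have sw17: "mult (mult (alpha w) (mult (x) (z))) (alpha (alpha y)) = - mult (alpha (alpha y)) (mult (alpha w) (mult (x) (z)))" by (rule anti)
  have sw18: "mult (mult (alpha w) (mult (y) (z))) (alpha (alpha x)) = - mult (alpha (alpha x)) (mult (alpha w) (mult (y) (z)))" by (rule anti)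
  have sw19: "mult (mult (x) (y)) (alpha w) = - mult (alpha w) (mult (x) (y))" by (rule anti)
  have sw20: "mult (mult (x) (y)) (alpha z) = - mult (alpha z) (mult (x) (y))" by (rule anti)
  have sw21: "mult (mult (alpha x) (alpha y)) (mult (alpha w) (alpha z)) = - mult (mult (alpha w) (alpha z)) (mult (alpha x) (alpha y))" by (rule anti)
  have sw22: "mult (mult (x) (z)) (alpha w) = - mult (alpha w) (mult (x) (z))" by (rule anti)
  have sw23: "mult (mult (x) (z)) (alpha y) = - mult (alpha y) (mult (x) (z))" by (rule anti)
  have sw24: "mult (mult (alpha x) (alpha z)) (mult (alpha w) (alpha y)) = - mult (mult (alpha w) (alpha y)) (mult (alpha x) (alpha z))" by (rule anti)
  have sw25: "mult (mult (alpha x) (mult (w) (y))) (alpha (alpha z)) = - mult (alpha (alpha z)) (mult (alpha x) (mult (w) (y)))" by (rule anti)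
  have sw26: "mult (mult (alpha x) (mult (w) (z))) (alpha (alpha y)) = - mult (alpha (alpha y)) (mult (alpha x) (mult (w) (z)))" by (rule anti)
  have sw27: "mult (mult (alpha x) (mult (y) (z))) (alpha (alpha w)) = - mult (alpha (alpha w)) (mult (alpha x) (mult (y) (z)))" by (rule anti)
  have sw28: "mult (mult (y) (z)) (alpha w) = - mult (alpha w) (mult (y) (z))" by (rule anti)
  have sw29: "mult (mult (y) (z)) (alpha x) = - mult (alpha x) (mult (y) (z))" by (rule anti)
  have sw30: "mult (mult (alpha y) (alpha z)) (mult (alpha w) (alpha x)) = - mult (mult (alpha w) (alpha x)) (mult (alpha y) (alpha z))" by (rule anti)
  have sw31: "mult (mult (alpha y) (mult (w) (x))) (alpha (alpha z)) = - mult (alpha (alpha z)) (mult (alpha y) (mult (w) (x)))" by (rule anti)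
  have sw32: "mult (mult (alpha y) (mult (w) (z))) (alpha (alpha x)) = - mult (alpha (alpha x)) (mult (alpha y) (mult (w) (z)))" by (rule anti)
  have sw33: "mult (mult (alpha y) (mult (x) (z))) (alpha (alpha w)) = - mult (alpha (alpha w)) (mult (alpha y) (mult (x) (z)))" by (rule anti)
  have sw34: "mult (mult (alpha z) (mult (w) (x))) (alpha (alpha y)) = - mult (alpha (alpha y)) (mult (alpha z) (mult (w) (x)))" by (rule anti)
  have sw35: "mult (mult (alpha z) (mult (w) (y))) (alpha (alpha x)) = - mult (alpha (alpha x)) (mult (alpha z) (mult (w) (y)))" by (rule anti)
  have sw36: "mult (mult (alpha z) (mult (x) (y))) (alpha (alpha w)) = - mult (alpha (alpha w)) (mult (alpha z) (mult (x) (y)))" by (rule anti)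
  have D: "(hom_jacobian mult alpha (mult w x) (alpha y) (alpha z)) - (mult (hom_jacobian mult alpha (w) (y) (z)) (alpha (alpha x)) + mult (alpha (alpha w)) (hom_jacobian mult alpha (x) (y) (z)) - (hom_jacobian mult alpha (mult y z) (alpha w) (alpha x) + hom_jacobian mult alpha (mult y z) (alpha w) (alpha x))) = 0" (is "?g - ?h = 0")
  proof -
    have "(?g - ?h) + (?g - ?h) = 0"
      apply (rule comb_LS[OF _ E1 E2 E3 E4])
      unfolding hom_jacobian_def
      by (simp only: addl addr negl negr aneg amul minus_minus sw1 sw2 sw3 sw4 sw5 sw6 sw7 sw8 sw9 sw10 sw11 sw12 sw13 sw14 sw15 sw16 sw17 sw18 sw19 sw20 sw21 sw22 sw23 sw24 sw25 sw26 sw27 sw28 sw29 sw30 sw31 sw32 sw33 sw34 sw35 sw36) (simp add: algebra_simps)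
    then show ?thesis by (rule halve[OF vs])
  qed
  then show ?thesis by simp
qed

lemma comb_SL: fixes g :: "'a::ab_group_add"
  shows "(g - h) + (g - h) + (g - h) = ((P1-Q1)+(P1-Q1)) - (P2-Q2) + ((P3-Q3)+(P3-Q3)) - (P4-Q4) \<Longrightarrow> P1=Q1 \<Longrightarrow> P2=Q2 \<Longrightarrow> P3=Q3 \<Longrightarrow> P4=Q4 \<Longrightarrow> (g-h)+(g-h)+(g-h) = 0"
  by simp
lemma StoL:
 fixes mult :: "'a::ab_group_add \<Rightarrow> 'a \<Rightarrow> 'a" and scale :: "'k::field_char_0 \<Rightarrow> 'a \<Rightarrow> 'a"
 assumes vs: "vector_space scale"
 and addl: "\<And>a b c. mult (a+b) c = mult a c + mult b c"
 and addr: "\<And>a b c. mult a (b+c) = mult a b + mult a c"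
 and negl: "\<And>a b. mult (-a) b = - mult a b"
 and negr: "\<And>a b. mult a (-b) = - mult a b"
 and aneg: "\<And>a. alpha (-a) = - alpha a"
 and amul: "\<And>a b. alpha (mult a b) = mult (alpha a) (alpha b)"
 and anti: "\<And>a b. mult a b = - mult b a"
 and H: "\<And>w x y z. hom_jacobian mult alpha (mult w x) (alpha y) (alpha z) = mult (hom_jacobian mult alpha (w) (y) (z)) (alpha (alpha x)) + mult (alpha (alpha w)) (hom_jacobian mult alpha (x) (y) (z)) - (hom_jacobian mult alpha (mult y z) (alpha w) (alpha x) + hom_jacobian mult alpha (mult y z) (alpha w) (alpha x))"
 shows "hom_jacobian mult alpha (alpha x) (alpha y) (mult w z) + hom_jacobian mult alpha (alpha w) (alpha y) (mult x z) = mult (hom_jacobian mult alpha (x) (y) (z)) (alpha (alpha w)) + mult (hom_jacobian mult alpha (w) (y) (z)) (alpha (alpha x))"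
proof -
  have E1: "hom_jacobian mult alpha (mult w y) (alpha x) (alpha z) = mult (hom_jacobian mult alpha (w) (x) (z)) (alpha (alpha y)) + mult (alpha (alpha w)) (hom_jacobian mult alpha (y) (x) (z)) - (hom_jacobian mult alpha (mult x z) (alpha w) (alpha y) + hom_jacobian mult alpha (mult x z) (alpha w) (alpha y))" by (rule H)
  have E2: "hom_jacobian mult alpha (mult w z) (alpha x) (alpha y) = mult (hom_jacobian mult alpha (w) (x) (y)) (alpha (alpha z)) + mult (alpha (alpha w)) (hom_jacobian mult alpha (z) (x) (y)) - (hom_jacobian mult alpha (mult x y) (alpha w) (alpha z) + hom_jacobian mult alpha (mult x y) (alpha w) (alpha z))" by (rule H)
  have E3: "hom_jacobian mult alpha (mult x y) (alpha w) (alpha z) = mult (hom_jacobian mult alpha (x) (w) (z)) (alpha (alpha y)) + mult (alpha (alpha x)) (hom_jacobian mult alpha (y) (w) (z)) - (hom_jacobian mult alpha (mult w z) (alpha x) (alpha y) + hom_jacobian mult alpha (mult w z) (alpha x) (alpha y))" by (rule H)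
  have E4: "hom_jacobian mult alpha (mult x z) (alpha w) (alpha y) = mult (hom_jacobian mult alpha (x) (w) (y)) (alpha (alpha z)) + mult (alpha (alpha x)) (hom_jacobian mult alpha (z) (w) (y)) - (hom_jacobian mult alpha (mult w y) (alpha x) (alpha z) + hom_jacobian mult alpha (mult w y) (alpha x) (alpha z))" by (rule H)
  have sw1: "mult (x) (w) = - mult (w) (x)" by (rule anti)
  have sw2: "mult (y) (w) = - mult (w) (y)" by (rule anti)
  have sw3: "mult (y) (x) = - mult (x) (y)" by (rule anti)
  have sw4: "mult (z) (w) = - mult (w) (z)" by (rule anti)
  have sw5: "mult (z) (x) = - mult (x) (z)" by (rule anti)
  have sw6: "mult (z) (y) = - mult (y) (z)" by (rule anti)
  have sw7: "mult (mult (w) (x)) (alpha y) = - mult (alpha y) (mult (w) (x))" by (rule anti)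
  have sw8: "mult (mult (w) (x)) (alpha z) = - mult (alpha z) (mult (w) (x))" by (rule anti)
  have sw9: "mult (mult (w) (y)) (alpha x) = - mult (alpha x) (mult (w) (y))" by (rule anti)
  have sw10: "mult (mult (w) (y)) (alpha z) = - mult (alpha z) (mult (w) (y))" by (rule anti)
  have sw11: "mult (mult (w) (z)) (alpha x) = - mult (alpha x) (mult (w) (z))" by (rule anti)
  have sw12: "mult (mult (w) (z)) (alpha y) = - mult (alpha y) (mult (w) (z))" by (rule anti)
  have sw13: "mult (mult (alpha w) (mult (x) (y))) (alpha (alpha z)) = - mult (alpha (alpha z)) (mult (alpha w) (mult (x) (y)))" by (rule anti)
  have sw14: "mult (mult (alpha w) (mult (x) (z))) (alpha (alpha y)) = - mult (alpha (alpha y)) (mult (alpha w) (mult (x) (z)))" by (rule anti)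
  have sw15: "mult (mult (alpha w) (mult (y) (z))) (alpha (alpha x)) = - mult (alpha (alpha x)) (mult (alpha w) (mult (y) (z)))" by (rule anti)
  have sw16: "mult (mult (x) (y)) (alpha w) = - mult (alpha w) (mult (x) (y))" by (rule anti)
  have sw17: "mult (mult (x) (y)) (alpha z) = - mult (alpha z) (mult (x) (y))" by (rule anti)
  have sw18: "mult (mult (alpha x) (alpha y)) (mult (alpha w) (alpha z)) = - mult (mult (alpha w) (alpha z)) (mult (alpha x) (alpha y))" by (rule anti)
  have sw19: "mult (mult (x) (z)) (alpha w) = - mult (alpha w) (mult (x) (z))" by (rule anti)
  have sw20: "mult (mult (x) (z)) (alpha y) = - mult (alpha y) (mult (x) (z))" by (rule anti)
  have sw21: "mult (mult (alpha x) (alpha z)) (mult (alpha w) (alpha y)) = - mult (mult (alpha w) (alpha y)) (mult (alpha x) (alpha z))" by (rule anti)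
  have sw22: "mult (mult (alpha x) (mult (w) (y))) (alpha (alpha z)) = - mult (alpha (alpha z)) (mult (alpha x) (mult (w) (y)))" by (rule anti)
  have sw23: "mult (mult (alpha x) (mult (w) (z))) (alpha (alpha y)) = - mult (alpha (alpha y)) (mult (alpha x) (mult (w) (z)))" by (rule anti)
  have sw24: "mult (mult (alpha x) (mult (y) (z))) (alpha (alpha w)) = - mult (alpha (alpha w)) (mult (alpha x) (mult (y) (z)))" by (rule anti)
  have sw25: "mult (mult (y) (z)) (alpha w) = - mult (alpha w) (mult (y) (z))" by (rule anti)
  have sw26: "mult (mult (y) (z)) (alpha x) = - mult (alpha x) (mult (y) (z))" by (rule anti)
  have sw27: "mult (mult (alpha y) (mult (w) (x))) (alpha (alpha z)) = - mult (alpha (alpha z)) (mult (alpha y) (mult (w) (x)))" by (rule anti)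
  have sw28: "mult (mult (alpha y) (mult (w) (z))) (alpha (alpha x)) = - mult (alpha (alpha x)) (mult (alpha y) (mult (w) (z)))" by (rule anti)
  have sw29: "mult (mult (alpha y) (mult (x) (z))) (alpha (alpha w)) = - mult (alpha (alpha w)) (mult (alpha y) (mult (x) (z)))" by (rule anti)
  have sw30: "mult (mult (alpha z) (mult (w) (x))) (alpha (alpha y)) = - mult (alpha (alpha y)) (mult (alpha z) (mult (w) (x)))" by (rule anti)
  have sw31: "mult (mult (alpha z) (mult (w) (y))) (alpha (alpha x)) = - mult (alpha (alpha x)) (mult (alpha z) (mult (w) (y)))" by (rule anti)
  have sw32: "mult (mult (alpha z) (mult (x) (y))) (alpha (alpha w)) = - mult (alpha (alpha w)) (mult (alpha z) (mult (x) (y)))" by (rule anti)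
  have D: "(hom_jacobian mult alpha (alpha x) (alpha y) (mult w z) + hom_jacobian mult alpha (alpha w) (alpha y) (mult x z)) - (mult (hom_jacobian mult alpha (x) (y) (z)) (alpha (alpha w)) + mult (hom_jacobian mult alpha (w) (y) (z)) (alpha (alpha x))) = 0" (is "?g - ?h = 0")
  proof -
    have "(?g - ?h) + (?g - ?h) + (?g - ?h) = 0"
      apply (rule comb_SL[OF _ E1 E2 E3 E4])
      unfolding hom_jacobian_def
      by (simp only: addl addr negl negr aneg amul minus_minus sw1 sw2 sw3 sw4 sw5 sw6 sw7 sw8 sw9 sw10 sw11 sw12 sw13 sw14 sw15 sw16 sw17 sw18 sw19 sw20 sw21 sw22 sw23 sw24 sw25 sw26 sw27 sw28 sw29 sw30 sw31 sw32) (simp add: algebra_simps)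
    then show ?thesis by (rule third[OF vs])
  qed
  then show ?thesis by simp
qed

lemma LtoM:
 fixes mult :: "'a::ab_group_add \<Rightarrow> 'a \<Rightarrow> 'a" and scale :: "'k::field_char_0 \<Rightarrow> 'a \<Rightarrow> 'a"
 assumes vs: "vector_space scale"
 and H: "\<And>x w y z. hom_jacobian mult alpha (alpha x) (alpha y) (mult w z) + hom_jacobian mult alpha (alpha w) (alpha y) (mult x z) = mult (hom_jacobian mult alpha (x) (y) (z)) (alpha (alpha w)) + mult (hom_jacobian mult alpha (w) (y) (z)) (alpha (alpha x))"
 shows "hom_malcev_identity mult alpha"
  unfolding hom_malcev_identity_def
proof (intro allI)
  fix x y z
  have E: "hom_jacobian mult alpha (alpha x) (alpha y) (mult x z) + hom_jacobian mult alpha (alpha x) (alpha y) (mult x z) = mult (hom_jacobian mult alpha x y z) (alpha (alpha x)) + mult (hom_jacobian mult alpha x y z) (alpha (alpha x))"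
    by (rule H)
  have "(hom_jacobian mult alpha (alpha x) (alpha y) (mult x z) - mult (hom_jacobian mult alpha x y z) (alpha (alpha x)))
      + (hom_jacobian mult alpha (alpha x) (alpha y) (mult x z) - mult (hom_jacobian mult alpha x y z) (alpha (alpha x))) = 0"
    using E by (simp add: algebra_simps)
  from halve[OF vs this] show "hom_jacobian mult alpha (alpha x) (alpha y) (mult x z) = mult (hom_jacobian mult alpha x y z) (alpha (alpha x))"
    by simp
qed

theorem mainTheorem1:
  fixes scale :: "'k::field_char_0 \<Rightarrow> 'a::ab_group_add \<Rightarrow> 'a"
    and mult :: "'a \<Rightarrow> 'a \<Rightarrow> 'a" and alpha :: "'a \<Rightarrow> 'a"
  shows "(hom_malcev scale mult alpha \<longrightarrow> star_identity mult alpha) \<and>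
         (hom_algebra scale mult alpha \<and> anticommutative mult \<longrightarrow>
            (star_identity mult alpha \<longleftrightarrow> hom_malcev_identity mult alpha))"
proof -
  have key: "star_identity mult alpha \<longleftrightarrow> hom_malcev_identity mult alpha"
    if ha: "hom_algebra scale mult alpha" and ac: "anticommutative mult"
  proof -
    have vs: "vector_space scale" using ha unfolding hom_algebra_def by blast
    have addr: "\<And>a b c. mult a (b+c) = mult a b + mult a c"
      using ha unfolding hom_algebra_def by (blast intro: lin_add)
    have addl: "\<And>a b c. mult (a+b) c = mult a c + mult b c"
    proof -
      fix a b c
      have l: "Vector_Spaces.linear scale scale (\<lambda>x. mult x c)" using ha unfolding hom_algebra_def by blast
      show "mult (a+b) c = mult a c + mult b c" using lin_add[OF l, of a b] by simp
    qed
    have aadd: "\<And>a b. alpha (a+b) = alpha a + alpha b"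
      using ha unfolding hom_algebra_def by (blast intro: lin_add)
    have amul: "\<And>a b. alpha (mult a b) = mult (alpha a) (alpha b)"
      using ha unfolding hom_algebra_def by blast
    have anti: "\<And>a b. mult a b = - mult b a" using ac unfolding anticommutative_def by blast
    have negr: "\<And>a b. mult a (-b) = - mult a b"
      by (rule add_neg[where f="mult _"]) (rule addr)
    have negl: "\<And>a b. mult (-a) b = - mult a b"
    proof -
      fix a b
      show "mult (-a) b = - mult a b"
        using add_neg[where f="\<lambda>x. mult x b", OF addl] by simp
    qed
    have aneg: "\<And>a. alpha (-a) = - alpha a"
      by (rule add_neg[where f=alpha]) (rule aadd)
    show ?thesis
    proof
      assume S: "star_identity mult alpha"
      have L: "\<And>x w y z. hom_jacobian mult alpha (alpha x) (alpha y) (mult w z) + hom_jacobian mult alpha (alpha w) (alpha y) (mult x z) = mult (hom_jacobian mult alpha (x) (y) (z)) (alpha (alpha w)) + mult (hom_jacobian mult alpha (w) (y) (z)) (alpha (alpha x))"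
        by (rule StoL[OF vs addl addr negl negr aneg amul anti]) (use S in \<open>unfold star_identity_def, blast\<close>)
      show "hom_malcev_identity mult alpha" by (rule LtoM[OF vs L])
    next
      assume M: "hom_malcev_identity mult alpha"
      have L: "\<And>x w y z. hom_jacobian mult alpha (alpha x) (alpha y) (mult w z) + hom_jacobian mult alpha (alpha w) (alpha y) (mult x z) = mult (hom_jacobian mult alpha (x) (y) (z)) (alpha (alpha w)) + mult (hom_jacobian mult alpha (w) (y) (z)) (alpha (alpha x))"
        by (rule MtoL[OF addl addr aadd]) (use M in \<open>unfold hom_malcev_identity_def, blast\<close>)
      show "star_identity mult alpha" unfolding star_identity_def
        by (intro allI, rule LtoS[OF vs addl addr negl negr aneg amul anti L])
    qed
  qed
  show ?thesis using key unfolding hom_malcev_def by blast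
qed

end
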